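(* Let $b_1,\ldots,b_q\in[n]$, $a_1,\ldots,a_q\in\mathbb{R}^m$, $K\in\{0,\ldots,\min\{m,n\}-1\}$, $\gamma>0$, and let $X^*$ be a d-stationary point of $$\min_{X\in\mathbb{R}^{m\times n}}\ \sum_{j\in[q]}\log\Big(1+\sum_{l\in[n]\setminus\{b_j\}}\exp(a_j^\top x_l-a_j^\top x_{b_j})\Big)+\gamma\mathcal{T}_K(X),$$ where $x_l$ is the $l$-th column of $X$. If $\gamma>\sqrt2\sum_{j\in[q]}\|a_j\|_2$, then $\mathcal{T}_K(X^* )=0$, i.e., $\mathrm{rank}(X^* )\le K$.
   Context: $\mathcal{T}_K(X)=\sum_{i=K+1}^{\min\{m,n\}}\sigma_i(X)$, with $\sigma_i(X)$ the $i$-th largest singular value. A point is d-stationary if the directional derivative of the objective there is $\ge0$ in every direction. *)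

theory Defs
  imports "Jordan_Normal_Form.Char_Poly" "Jordan_Normal_Form.DL_Rank"
begin

definition singular_values :: "real mat \<Rightarrow> real list" where
  "singular_values X =
     rev (sort (map sqrt (sorted_list_of_multiset (proots (char_poly (transpose_mat X * X))))))"

text \<open>sigma_i(X), 1-indexed as in the paper.\<close>
definition sigma :: "real mat \<Rightarrow> nat \<Rightarrow> real" where
  "sigma X i = singular_values X ! (i - 1)"

definition trunc_nuc :: "nat \<Rightarrow> real mat \<Rightarrow> real" where
  "trunc_nuc K X = (\<Sum>i = K + 1 .. min (dim_row X) (dim_col X). sigma X i)"

definition has_dir_deriv :: "(real mat \<Rightarrow> real) \<Rightarrow> real mat \<Rightarrow> real mat \<Rightarrow> real \<Rightarrow> bool" where
  "has_dir_deriv F X D L \<longleftrightarrow>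
     ((\<lambda>t. (F (X + t \<cdot>\<^sub>m D) - F X) / t) \<longlongrightarrow> L) (at_right 0)"

definition d_stationary :: "nat \<Rightarrow> nat \<Rightarrow> (real mat \<Rightarrow> real) \<Rightarrow> real mat \<Rightarrow> bool" where
  "d_stationary m n F X \<longleftrightarrow> X \<in> carrier_mat m n \<and>
     (\<forall>D \<in> carrier_mat m n. \<exists>L. has_dir_deriv F X D L \<and> L \<ge> 0)"

text \<open>The objective; indices are 0-based: columns l < n, samples j < q.\<close>
definition objective ::
  "nat \<Rightarrow> nat \<Rightarrow> (nat \<Rightarrow> nat) \<Rightarrow> (nat \<Rightarrow> real vec) \<Rightarrow> nat \<Rightarrow> real \<Rightarrow> real mat \<Rightarrow> real" where
  "objective n q b a K \<gamma> X =
     (\<Sum>j<q. ln (1 + (\<Sum>l \<in> {0..<n} - {b j}.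
          exp (a j \<bullet> col X l - a j \<bullet> col X (b j)))))
     + \<gamma> * trunc_nuc K X"

end

theory Submission imports Defs "Jordan_Normal_Form.Schur_Decomposition" begin

lemma real_root_sym:
  fixes A :: "real mat"
  assumes A: "A \<in> carrier_mat n n" and sym: "transpose_mat A = A" and n: "n > 0"
  shows "\<exists>r. poly (char_poly A) r = 0"
proof -
  define B where "B = map_mat complex_of_real A"
  have B: "B \<in> carrier_mat n n" using A unfolding B_def by auto
  obtain as where cp: "char_poly B = (\<Prod>a\<leftarrow>as. [:- a, 1:])" and len: "length as = n"
    using char_poly_factorized[OF B] by blast
  obtain \<mu> rest where as: "as = \<mu> # rest" using len n by (cases as) auto
  have "poly (char_poly B) \<mu> = 0" unfolding cp as by simp
  hence "eigenvalue B \<mu>" using eigenvalue_root_char_poly[OF B] by simp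
  then obtain z where ev: "eigenvector B z \<mu>" unfolding eigenvalue_def by blast
  hence z: "z \<in> carrier_vec n" and z0: "z \<noteq> 0\<^sub>v n" and Bz: "B *\<^sub>v z = \<mu> \<cdot>\<^sub>v z"
    unfolding eigenvector_def using B by auto
  have Aij: "A $$ (j,i) = A $$ (i,j)" if "i < n" "j < n" for i j
  proof -
    have "transpose_mat A $$ (i,j) = A $$ (j,i)" using A that by simp
    thus ?thesis using sym by simp
  qed
  have Bzi: "(B *\<^sub>v z) $ i = (\<Sum>j<n. complex_of_real (A $$ (i,j)) * z $ j)" if "i < n" for i
    using that A z unfolding B_def by (auto simp: scalar_prod_def lessThan_atLeast0 intro!: sum.cong)
  define s where "s = (\<Sum>i<n. cnj (z $ i) * (B *\<^sub>v z) $ i)"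
  have s1: "s = (\<Sum>i<n. \<Sum>j<n. complex_of_real (A $$ (i,j)) * (cnj (z $ i) * z $ j))"
    unfolding s_def by (auto simp: Bzi sum_distrib_left mult_ac intro!: sum.cong)
  define N where "N = (\<Sum>i<n. (cmod (z $ i))^2)"
  have s2: "s = \<mu> * complex_of_real N"
  proof -
    have "s = (\<Sum>i<n. cnj (z $ i) * (\<mu> * z $ i))" unfolding s_def using Bz z
      by (intro sum.cong) auto
    also have "\<dots> = \<mu> * (\<Sum>i<n. complex_of_real ((cmod (z $ i))^2))"
    proof -
      have "cnj (z $ i) * (\<mu> * z $ i) = \<mu> * complex_of_real ((cmod (z $ i))^2)" for i
        by (metis complex_norm_square mult.commute mult.left_commute of_real_power)
      hence "(\<Sum>i<n. cnj (z $ i) * (\<mu> * z $ i)) = (\<Sum>i<n. \<mu> * complex_of_real ((cmod (z $ i))^2))"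
        by (intro sum.cong) auto
      thus ?thesis by (simp only: sum_distrib_left)
    qed
    finally show ?thesis unfolding N_def by simp
  qed
  have "cnj s = (\<Sum>i<n. \<Sum>j<n. complex_of_real (A $$ (i,j)) * (z $ i * cnj (z $ j)))"
    unfolding s1 by (simp add: mult_ac)
  also have "\<dots> = (\<Sum>j<n. \<Sum>i<n. complex_of_real (A $$ (i,j)) * (z $ i * cnj (z $ j)))"
    by (rule sum.swap)
  also have "\<dots> = s" unfolding s1 using Aij by (auto simp: mult_ac intro!: sum.cong)
  finally have cs: "cnj s = s" .
  have "Im (cnj s) = - Im s" by simp
  hence "Im s = 0" using cs by simp
  have "N > 0"
  proof -
    obtain i where i: "i < n" "z $ i \<noteq> 0" using z z0 by (metis carrier_vecD eq_vecI index_zero_vec)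
    have "(cmod (z $ i))^2 > 0" using i by simp
    moreover have "(cmod (z $ i))^2 \<le> N" unfolding N_def
      by (rule member_le_sum) (use i in auto)
    ultimately show ?thesis by linarith
  qed
  have "Im \<mu> = 0" using \<open>Im s = 0\<close> \<open>N > 0\<close> unfolding s2 by simp
  hence mu: "\<mu> = complex_of_real (Re \<mu>)" by (simp add: complex_eq_iff)
  have "complex_of_real (poly (char_poly A) (Re \<mu>)) = poly (map_poly of_real (char_poly A)) (of_real (Re \<mu>))"
    by (induction "char_poly A") (auto simp: map_poly_pCons)
  also have "map_poly of_real (char_poly A) = char_poly B"
    unfolding B_def by (rule of_real_hom.char_poly_hom[OF A, symmetric])
  also have "poly (char_poly B) (of_real (Re \<mu>)) = 0" using mu \<open>poly (char_poly B) \<mu> = 0\<close> by simp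
  finally show ?thesis by auto
qed

lemma orth_completion:
  fixes v :: "real vec"
  assumes v: "v \<in> carrier_vec n" and v1: "v \<bullet> v = 1"
  shows "\<exists>Q \<in> carrier_mat n n. transpose_mat Q * Q = 1\<^sub>m n \<and> col Q 0 = v"
proof -
  interpret cof_vec_space n "TYPE(real)" .
  have v0: "v \<noteq> 0\<^sub>v n" using v1 v by auto
  define b where "b = basis_completion v"
  from basis_completion[OF v v0, folded b_def]
  have dist_b: "distinct b" 
    and indep: "\<not> lin_dep (set b)" and b: "set b \<subseteq> carrier_vec n" and hdb: "hd b = v" 
    and len_b: "length b = n" by auto
  have n: "n > 0" using v1 v by (cases n) (auto simp: scalar_prod_def)
  from hdb len_b n obtain vs where bv: "b = v # vs" by (cases b, auto)
  define ws where "ws = gram_schmidt n b"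
  from gram_schmidt_result[OF b dist_b indep refl, folded ws_def]
  have ws: "set ws \<subseteq> carrier_vec n" "corthogonal ws" "length ws = n" 
    by (auto simp: len_b)
  from gram_schmidt_hd[OF v, of vs, folded bv] have hdws: "hd ws = v" unfolding ws_def .
  have ws0: "ws ! 0 = v" using hdws n ws(3) by (cases ws) auto
  have orth: "ws ! i \<bullet> ws ! j = (if i = j then ws ! i \<bullet> ws ! i else 0)"
    and pos: "ws ! i \<bullet> ws ! i \<noteq> 0" if "i < n" "j < n" for i j
    using corthogonalD[OF ws(2), of i j] corthogonalD[OF ws(2), of i i] that ws(3)
    by (auto simp: conjugate_id)
  define nv where "nv = (\<lambda>w :: real vec. (1 / sqrt (w \<bullet> w)) \<cdot>\<^sub>v w)"
  define Q where "Q = mat_of_cols n (map nv ws)"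
  have Q: "Q \<in> carrier_mat n n" unfolding Q_def using ws(3) by auto
  have wsc: "ws ! i \<in> carrier_vec n" if "i < n" for i using ws that by auto
  have colQ: "col Q i = nv (ws ! i)" if "i < n" for i
    unfolding Q_def using that ws(3) wsc[OF that] by (simp add: nv_def)
  have sq: "0 \<le> w \<bullet> w" for w :: "real vec"
    by (auto simp: scalar_prod_def intro!: sum_nonneg)
  have "transpose_mat Q * Q = 1\<^sub>m n"
  proof (rule eq_matI)
    fix i j assume "i < dim_row (1\<^sub>m n :: real mat)" "j < dim_col (1\<^sub>m n :: real mat)"
    hence i: "i < n" and j: "j < n" by auto
    have "(transpose_mat Q * Q) $$ (i,j) = col Q i \<bullet> col Q j" using Q i j by simp
    also have "\<dots> = (1 / sqrt (ws!i \<bullet> ws!i)) * (1 / sqrt (ws!j \<bullet> ws!j)) * (ws ! i \<bullet> ws ! j)"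
      unfolding colQ[OF i] colQ[OF j] nv_def using wsc[OF i] wsc[OF j] by simp
    also have "\<dots> = 1\<^sub>m n $$ (i,j)"
    proof (cases "i = j")
      case True
      have p: "ws!i \<bullet> ws!i > 0" using pos[OF i i] sq[of "ws!i"] by linarith
      thus ?thesis using True i by (simp add: power_divide)
    next
      case False thus ?thesis using orth[OF i j] i j by simp
    qed
    finally show "(transpose_mat Q * Q) $$ (i,j) = 1\<^sub>m n $$ (i,j)" .
  qed (use Q in auto)
  moreover have "col Q 0 = v" using colQ[OF n] ws0 v1 by (simp add: nv_def)
  ultimately show ?thesis using Q by blast
qed


definition dg :: "nat \<Rightarrow> (nat \<Rightarrow> real) \<Rightarrow> real mat" where
  "dg n f = mat n n (\<lambda>(i,j). if i = j then f i else 0)"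

lemma dg_carrier[simp]: "dg n f \<in> carrier_mat n n"
  and dg_dim[simp]: "dim_row (dg n f) = n" "dim_col (dg n f) = n"
  unfolding dg_def by auto

lemma dg_index[simp]: "i < n \<Longrightarrow> j < n \<Longrightarrow> dg n f $$ (i,j) = (if i = j then f i else 0)"
  unfolding dg_def by auto

lemma orth_right:
  fixes V :: "real mat"
  assumes V: "V \<in> carrier_mat n n" and VV: "transpose_mat V * V = 1\<^sub>m n"
  shows "V * transpose_mat V = 1\<^sub>m n"
  using mat_mult_left_right_inverse[OF _ V VV] V by auto

lemma charpoly_decomp:
  fixes V :: "real mat"
  assumes V: "V \<in> carrier_mat n n" and VV: "transpose_mat V * V = 1\<^sub>m n"
    and A: "A = V * dg n f * transpose_mat V"
  shows "char_poly A = (\<Prod>i\<leftarrow>[0..<n]. [:- f i, 1:])"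
proof -
  have "similar_mat_wit A (dg n f) V (transpose_mat V)"
    unfolding similar_mat_wit_def Let_def using V VV orth_right[OF V VV] A by auto
  hence "similar_mat A (dg n f)" unfolding similar_mat_def by blast
  hence "char_poly A = char_poly (dg n f)" by (rule char_poly_similar)
  also have "\<dots> = (\<Prod>a\<leftarrow>diag_mat (dg n f). [:- a, 1:])"
    by (rule char_poly_upper_triangular[of _ n]) (auto simp: upper_triangular_def)
  also have "diag_mat (dg n f) = map f [0..<n]" unfolding diag_mat_def by simp
  finally show ?thesis by (simp add: comp_def)
qed

lemma poly_prod_lin_zero: "poly (\<Prod>i\<leftarrow>xs. [:- f i, 1:]) (x::real) = 0 \<longleftrightarrow> (\<exists>i\<in>set xs. x = f i)"
  by (induction xs) auto


lemma sprod_self_pos: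
  fixes v :: "real vec"
  assumes v: "v \<in> carrier_vec n" and v0: "v \<noteq> 0\<^sub>v n"
  shows "v \<bullet> v > 0"
proof -
  obtain i where i: "i < n" "v $ i \<noteq> 0" using v v0 by (metis carrier_vecD eq_vecI index_zero_vec)
  have "(v $ i)^2 > 0" using i by simp
  moreover have "(v $ i)^2 \<le> (\<Sum>k\<in>{0..<n}. v $ k * v $ k)"
    using member_le_sum[of i "{0..<n}" "\<lambda>k. v $ k * v $ k"] i by (simp add: power2_eq_square)
  moreover have "v \<bullet> v = (\<Sum>k\<in>{0..<n}. v $ k * v $ k)" using v by (simp add: scalar_prod_def)
  ultimately show ?thesis by linarith
qed

theorem spectral:
  fixes A :: "real mat"
  shows "A \<in> carrier_mat n n \<Longrightarrow> transpose_mat A = A \<Longrightarrow>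
    \<exists>V f. V \<in> carrier_mat n n \<and> transpose_mat V * V = 1\<^sub>m n \<and>
      (\<forall>i j. i \<le> j \<longrightarrow> j < n \<longrightarrow> f j \<le> f i) \<and> A = V * dg n f * transpose_mat V"
proof (induction n arbitrary: A)
  case 0
  show ?case by (rule exI[of _ "1\<^sub>m 0"], rule exI[of _ "\<lambda>_. 0"]) (use 0 in \<open>auto intro!: eq_matI\<close>)
next
  case (Suc n1 A)
  define N where "N = Suc n1"
  have A: "A \<in> carrier_mat N N" and symA: "transpose_mat A = A" using Suc N_def by auto
  define R where "R = {r. poly (char_poly A) r = 0}"
  have "char_poly A \<noteq> 0" using degree_monic_char_poly[OF A] by auto
  hence finR: "finite R" unfolding R_def by (rule poly_roots_finite)
  have "R \<noteq> {}" using real_root_sym[OF A symA] unfolding R_def N_def by auto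
  define e where "e = Max R"
  have eR: "e \<in> R" and emax: "\<And>r. r \<in> R \<Longrightarrow> r \<le> e" unfolding e_def using finR \<open>R \<noteq> {}\<close> by auto
  have "eigenvalue A e" using eR eigenvalue_root_char_poly[OF A] unfolding R_def by auto
  from find_eigenvector[OF A this] obtain v0 where "eigenvector A v0 e" by blast
  hence v0: "v0 \<in> carrier_vec N" and v00: "v0 \<noteq> 0\<^sub>v N" and Av0: "A *\<^sub>v v0 = e \<cdot>\<^sub>v v0"
    unfolding eigenvector_def using A by auto
  have p0: "v0 \<bullet> v0 > 0" by (rule sprod_self_pos[OF v0 v00])
  define v where "v = (1 / sqrt (v0 \<bullet> v0)) \<cdot>\<^sub>v v0"
  have v: "v \<in> carrier_vec N" unfolding v_def using v0 by auto
  have v1: "v \<bullet> v = 1" unfolding v_def using v0 p0 by (simp add: power_divide)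
  have Av: "A *\<^sub>v v = e \<cdot>\<^sub>v v" unfolding v_def using mult_mat_vec[OF A v0] Av0 by (auto simp: smult_smult_assoc mult.commute)
  obtain Q where Q: "Q \<in> carrier_mat N N" and QQ: "transpose_mat Q * Q = 1\<^sub>m N" and Q0: "col Q 0 = v"
    using orth_completion[OF v v1] by blast
  have QQ': "Q * transpose_mat Q = 1\<^sub>m N" by (rule orth_right[OF Q QQ])
  have Qt: "transpose_mat Q \<in> carrier_mat N N" using Q by auto
  have colQ: "col Q i \<bullet> col Q j = (if i = j then 1 else 0)" if "i < N" "j < N" for i j
  proof -
    have "(transpose_mat Q * Q) $$ (i,j) = col Q i \<bullet> col Q j" using Q that by simp
    thus ?thesis using QQ that by simp
  qed
  define A' where "A' = transpose_mat Q * A * Q"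
  have A'c: "A' \<in> carrier_mat N N" unfolding A'_def using Q A by auto
  have A'sym: "transpose_mat A' = A'"
  proof -
    have QA: "transpose_mat Q * A \<in> carrier_mat N N" using Q A by auto
    have "transpose_mat A' = transpose_mat Q * transpose_mat (transpose_mat Q * A)"
      unfolding A'_def by (rule transpose_mult[OF QA Q])
    also have "transpose_mat (transpose_mat Q * A) = transpose_mat A * Q"
      using transpose_mult[OF Qt A] by simp
    finally show ?thesis unfolding A'_def using Q A symA by simp
  qed
  have A'0: "A' $$ (i,0) = (if i = 0 then e else 0)" if i: "i < N" for i
  proof -
    have "A' = transpose_mat Q * (A * Q)" unfolding A'_def using Q A by auto
    hence "A' $$ (i,0) = row (transpose_mat Q) i \<bullet> col (A * Q) 0" using Q A i by (simp add: N_def)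
    also have "col (A * Q) 0 = e \<cdot>\<^sub>v v" using col_mult2[OF A Q, of 0] Q0 Av by (simp add: N_def)
    also have "row (transpose_mat Q) i = col Q i" using Q i by simp
    also have "col Q i \<bullet> (e \<cdot>\<^sub>v v) = e * (col Q i \<bullet> col Q 0)" using Q v i Q0 by simp
    finally show ?thesis using colQ[OF i, of 0] by (simp add: N_def)
  qed
  have A'0': "A' $$ (0,j) = (if j = 0 then e else 0)" if j: "j < N" for j
  proof -
    have "A' $$ (0,j) = transpose_mat A' $$ (j,0)" using A'c j by (simp add: N_def)
    thus ?thesis using A'sym A'0[OF j] by simp
  qed
  define A3 where "A3 = mat n1 n1 (\<lambda>(i,j). A' $$ (Suc i, Suc j))"
  have A3c: "A3 \<in> carrier_mat n1 n1" unfolding A3_def by auto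
  have A3sym: "transpose_mat A3 = A3"
  proof (rule eq_matI)
    fix i j assume "i < dim_row A3" "j < dim_col A3"
    hence i: "i < n1" and j: "j < n1" unfolding A3_def by auto
    have "A' $$ (Suc j, Suc i) = transpose_mat A' $$ (Suc i, Suc j)" using A'c i j by (simp add: N_def)
    thus "transpose_mat A3 $$ (i,j) = A3 $$ (i,j)" unfolding A3_def using i j A'sym by simp
  qed (auto simp: A3_def)
  from Suc.IH[OF A3c A3sym] obtain V' g where V': "V' \<in> carrier_mat n1 n1"
    and V'V': "transpose_mat V' * V' = 1\<^sub>m n1" and gmono: "\<forall>i j. i \<le> j \<longrightarrow> j < n1 \<longrightarrow> g j \<le> g i"
    and A3eq: "A3 = V' * dg n1 g * transpose_mat V'" by blast
  define E where "E = mat 1 1 (\<lambda>_. e)"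
  have E: "E \<in> carrier_mat 1 1" unfolding E_def by auto
  have A'blk: "A' = four_block_mat E (0\<^sub>m 1 n1) (0\<^sub>m n1 1) A3"
  proof (rule eq_matI)
    fix i j assume "i < dim_row (four_block_mat E (0\<^sub>m 1 n1) (0\<^sub>m n1 1) A3)"
      "j < dim_col (four_block_mat E (0\<^sub>m 1 n1) (0\<^sub>m n1 1) A3)"
    hence i: "i < N" and j: "j < N" using E A3c by (auto simp: N_def)
    show "A' $$ (i,j) = four_block_mat E (0\<^sub>m 1 n1) (0\<^sub>m n1 1) A3 $$ (i,j)"
    proof (cases "i = 0 \<or> j = 0")
      case True
      thus ?thesis using A'0 A'0' i j E A3c by (auto simp: E_def N_def)
    next
      case False
      then obtain i' j' where "i = Suc i'" "j = Suc j'" by (metis not0_implies_Suc)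
      thus ?thesis using i j E A3c by (auto simp: A3_def N_def)
    qed
  qed (use A'c E A3c in \<open>auto simp: N_def\<close>)
  define W where "W = four_block_mat (1\<^sub>m 1) (0\<^sub>m 1 n1) (0\<^sub>m n1 1) V'"
  have W: "W \<in> carrier_mat N N" unfolding W_def N_def using V' by auto
  have WW: "transpose_mat W * W = 1\<^sub>m N"
    unfolding W_def using V' V'V'
    by (simp add: transpose_four_block_mat[of _ 1 1 _ n1 _ n1] mult_four_block_mat[of _ 1 1 _ n1 _ n1 _ _ 1 _ n1] N_def)
  define f where "f = (\<lambda>i. if i = 0 then e else g (i - 1))"
  have DD: "dg N f = four_block_mat E (0\<^sub>m 1 n1) (0\<^sub>m n1 1) (dg n1 g)"
    by (rule eq_matI) (auto simp: f_def E_def N_def)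
  have c3: "V' * dg n1 g * transpose_mat V' \<in> carrier_mat n1 n1" using V' by auto
  have "W * dg N f * transpose_mat W = four_block_mat E (0\<^sub>m 1 n1) (0\<^sub>m n1 1) (V' * dg n1 g * transpose_mat V')"
    unfolding DD W_def using V' E left_add_zero_mat[OF c3]
    by (simp add: transpose_four_block_mat[of _ 1 1 _ n1 _ n1] mult_four_block_mat[of _ 1 1 _ n1 _ n1 _ _ 1 _ n1]
        mult_four_block_mat[of _ 1 1 _ n1 _ n1 _ _ 1 _ n1] N_def)
  also have "\<dots> = A'" unfolding A'blk A3eq ..
  finally have WDW: "W * dg N f * transpose_mat W = A'" .
  define V where "V = Q * W"
  have V: "V \<in> carrier_mat N N" unfolding V_def using Q W by auto
  have VV: "transpose_mat V * V = 1\<^sub>m N"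
  proof -
    have "transpose_mat V * V = transpose_mat W * (transpose_mat Q * Q) * W"
      unfolding V_def using Q W by (simp add: transpose_mult[of _ N N] assoc_mult_mat[of _ N N _ N _ N])
    also have "\<dots> = 1\<^sub>m N" using QQ WW W by simp
    finally show ?thesis .
  qed
  have AQ: "A = Q * A' * transpose_mat Q"
  proof -
    have "Q * A' * transpose_mat Q = (Q * transpose_mat Q) * A * (Q * transpose_mat Q)"
      unfolding A'_def using Q A by (simp add: assoc_mult_mat[of _ N N _ N _ N])
    thus ?thesis using QQ' A by simp
  qed
  have Aeq: "A = V * dg N f * transpose_mat V"
  proof -
    have "V * dg N f * transpose_mat V = Q * (W * dg N f * transpose_mat W) * transpose_mat Q"
      unfolding V_def using Q W by (simp add: transpose_mult[of _ N N] assoc_mult_mat[of _ N N _ N _ N] mult_carrier_mat[of _ N N _ N])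
    thus ?thesis using AQ WDW by simp
  qed
  have cp: "char_poly A = (\<Prod>i\<leftarrow>[0..<N]. [:- f i, 1:])" by (rule charpoly_decomp[OF V VV Aeq])
  have fR: "f i \<le> e" if "i < N" for i
    using emax[of "f i"] that unfolding R_def cp poly_prod_lin_zero by force
  have mono: "\<forall>i j. i \<le> j \<longrightarrow> j < N \<longrightarrow> f j \<le> f i"
  proof (intro allI impI)
    fix i j assume ij: "i \<le> j" "j < N"
    show "f j \<le> f i"
    proof (cases "i = 0")
      case True thus ?thesis using fR[OF ij(2)] by (simp add: f_def)
    next
      case False thus ?thesis using ij gmono by (auto simp: f_def N_def)
    qed
  qed
  show ?case using V VV mono Aeq unfolding N_def by blast
qed


lemma dg_mult: "dg n a * dg n b = dg n (\<lambda>i. a i * b i)"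
proof (rule eq_matI)
  fix i j assume "i < dim_row (dg n (\<lambda>i. a i * b i))" "j < dim_col (dg n (\<lambda>i. a i * b i))"
  hence i: "i < n" and j: "j < n" by auto
  have "(dg n a * dg n b) $$ (i,j) = (\<Sum>k\<in>{0..<n}. (if i = k then a i else 0) * (if k = j then b k else 0))"
    using i j by (simp add: scalar_prod_def)
  also have "\<dots> = (\<Sum>k\<in>{0..<n}. if k = i then (if i = j then a i * b i else 0) else 0)"
    by (rule sum.cong) auto
  also have "\<dots> = dg n (\<lambda>i. a i * b i) $$ (i,j)" using i j by simp
  finally show "(dg n a * dg n b) $$ (i,j) = dg n (\<lambda>i. a i * b i) $$ (i,j)" .
qed auto

lemma transpose_dg[simp]: "transpose_mat (dg n a) = dg n a"
  by (rule eq_matI) auto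

lemma dg_one: "dg n (\<lambda>_. 1) = 1\<^sub>m n"
  by (rule eq_matI) auto

lemma proots_lin_prod: "proots (\<Prod>i\<leftarrow>xs. [:- h i, 1:]) = mset (map (h :: nat \<Rightarrow> real) xs)"
proof (induction xs)
  case (Cons x xs)
  have "(\<Prod>i\<leftarrow>xs. [:- h i, 1:]) \<noteq> 0" by (auto simp: prod_list_zero_iff)
  hence "proots ([:- h x, 1:] * (\<Prod>i\<leftarrow>xs. [:- h i, 1:])) = proots [:- h x, 1:] + proots (\<Prod>i\<leftarrow>xs. [:- h i, 1:])"
    by (intro proots_mult) auto
  thus ?case using Cons by simp
qed simp

lemma singvals:
  fixes Z V :: "real mat"
  assumes V: "V \<in> carrier_mat n n" and VV: "transpose_mat V * V = 1\<^sub>m n"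
    and ZZ: "transpose_mat Z * Z = V * dg n h * transpose_mat V"
    and mono: "\<forall>i j. i \<le> j \<longrightarrow> j < n \<longrightarrow> h j \<le> h i"
  shows "singular_values Z = map (\<lambda>i. sqrt (h i)) [0..<n]"
proof -
  define xs where "xs = map h [0..<n]"
  have cp: "char_poly (transpose_mat Z * Z) = (\<Prod>i\<leftarrow>[0..<n]. [:- h i, 1:])"
    by (rule charpoly_decomp[OF V VV ZZ])
  have pr: "proots (char_poly (transpose_mat Z * Z)) = mset xs" unfolding cp xs_def by (rule proots_lin_prod)
  have sr: "sorted (rev xs)" unfolding sorted_rev_iff_nth_mono xs_def
    using mono by (auto simp: rev_nth)
  hence s1: "sort xs = rev xs" by (intro properties_for_sort) auto
  have s2: "sorted (map sqrt (rev xs))" using sr by (auto simp: sorted_map intro: sorted_wrt_mono_rel)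
  show ?thesis unfolding singular_values_def pr sorted_list_of_multiset_mset s1
    sorted_sort_id[OF s2] by (simp add: xs_def rev_map)
qed


lemma Ydg: "Y \<in> carrier_mat m n \<Longrightarrow> Y * dg n h = mat m n (\<lambda>(r,k). Y $$ (r,k) * h k)"
proof (rule eq_matI)
  fix r k assume Y: "Y \<in> carrier_mat m n" and "r < dim_row (mat m n (\<lambda>(r,k). Y $$ (r,k) * h k))"
    "k < dim_col (mat m n (\<lambda>(r,k). Y $$ (r,k) * h k))"
  hence r: "r < m" and k: "k < n" by auto
  have "(Y * dg n h) $$ (r,k) = (\<Sum>l\<in>{0..<n}. Y $$ (r,l) * (if l = k then h l else 0))"
    using Y r k by (simp add: scalar_prod_def)
  also have "\<dots> = (\<Sum>l\<in>{0..<n}. if l = k then Y $$ (r,k) * h k else 0)" by (rule sum.cong) auto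
  also have "\<dots> = Y $$ (r,k) * h k" using k by simp
  finally show "(Y * dg n h) $$ (r,k) = mat m n (\<lambda>(r,k). Y $$ (r,k) * h k) $$ (r,k)" using r k by simp
qed auto

lemma ent:
  assumes Y: "Y \<in> carrier_mat m n" and V: "V \<in> carrier_mat n n" and r: "r < m" and c: "c < n"
  shows "(Y * dg n h * transpose_mat V) $$ (r,c) = (\<Sum>k<n. Y $$ (r,k) * h k * V $$ (c,k))"
  using Y V r c by (simp add: Ydg[OF Y] scalar_prod_def lessThan_atLeast0)

lemma dg_mult_vec: assumes z: "z \<in> carrier_vec n"
  shows "dg n h *\<^sub>v z = vec n (\<lambda>i. h i * z $ i)"
proof (rule eq_vecI)
  fix i assume "i < dim_vec (vec n (\<lambda>i. h i * z $ i))"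
  hence i: "i < n" by simp
  have "(dg n h *\<^sub>v z) $ i = (\<Sum>k\<in>{0..<n}. (if i = k then h i else 0) * z $ k)"
    using i z by (simp add: scalar_prod_def)
  also have "\<dots> = (\<Sum>k\<in>{0..<n}. if k = i then h i * z $ i else 0)" by (rule sum.cong) auto
  finally show "(dg n h *\<^sub>v z) $ i = vec n (\<lambda>i. h i * z $ i) $ i" using i by simp
qed simp

lemma rank_sum_le:
  "vec_space.rank m (mat m n (\<lambda>(r,c). \<Sum>k<k0. F k r * G k c) :: real mat) \<le> k0"
proof (induction k0)
  case 0
  have e: "mat m n (\<lambda>(r,c). \<Sum>k<0. F k r * G k c) = (0\<^sub>m m n :: real mat)" by (rule eq_matI) auto
  show ?case by (subst e) (simp add: vec_space.rank_0I)
next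
  case (Suc k0)
  have eq: "mat m n (\<lambda>(r,c). \<Sum>k<Suc k0. F k r * G k c) =
    mat m n (\<lambda>(r,c). \<Sum>k<k0. F k r * G k c) + (mat m n (\<lambda>(r,c). F k0 r * G k0 c) :: real mat)"
    by (rule eq_matI) auto
  have r1: "vec_space.rank m (mat m n (\<lambda>(r,c). F k0 r * G k0 c) :: real mat) \<le> 1"
    by (rule vec_space.rank_le_1_product_entries[where f="F k0" and g="G k0" and nc=n]) auto
  have "vec_space.rank m (mat m n (\<lambda>(r,c). \<Sum>k<Suc k0. F k r * G k c) :: real mat)
     \<le> vec_space.rank m (mat m n (\<lambda>(r,c). \<Sum>k<k0. F k r * G k c) :: real mat)
       + vec_space.rank m (mat m n (\<lambda>(r,c). F k0 r * G k0 c) :: real mat)"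
    unfolding eq by (rule vec_space.rank_subadditive[of _ m n]) auto
  thus ?case using Suc r1 by linarith
qed

locale spec_setup =
  fixes X V :: "real mat" and f :: "nat \<Rightarrow> real" and m n K :: nat
  assumes X: "X \<in> carrier_mat m n" and V: "V \<in> carrier_mat n n" and VV: "transpose_mat V * V = 1\<^sub>m n"
   and XX: "transpose_mat X * X = V * dg n f * transpose_mat V"
   and mono: "\<forall>i j. i \<le> j \<longrightarrow> j < n \<longrightarrow> f j \<le> f i"
   and Kmn: "K < min m n"
begin

lemma VV': "V * transpose_mat V = 1\<^sub>m n" by (rule orth_right[OF V VV])

lemma Yc: "X * V \<in> carrier_mat m n" using X V by auto

lemma YY: "transpose_mat (X * V) * (X * V) = dg n f"
proof -
  have Xt: "transpose_mat X \<in> carrier_mat n m" and Vt: "transpose_mat V \<in> carrier_mat n n" using X V by auto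
  have D: "dg n f \<in> carrier_mat n n" by simp
  have "transpose_mat (X * V) * (X * V) = (transpose_mat V * transpose_mat X) * (X * V)"
    by (simp add: transpose_mult[OF X V])
  also have "\<dots> = transpose_mat V * (transpose_mat X * (X * V))"
    using Vt Xt Yc by (rule assoc_mult_mat)
  also have "transpose_mat X * (X * V) = (transpose_mat X * X) * V"
    using Xt X V by (rule assoc_mult_mat[symmetric])
  also have "\<dots> = (V * dg n f * transpose_mat V) * V" unfolding XX ..
  also have "\<dots> = (V * dg n f) * (transpose_mat V * V)"
    using mult_carrier_mat[OF V D] Vt V by (rule assoc_mult_mat)
  also have "\<dots> = V * dg n f" unfolding VV using mult_carrier_mat[OF V D] by simp
  also have "transpose_mat V * (V * dg n f) = (transpose_mat V * V) * dg n f"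
    using Vt V D by (rule assoc_mult_mat[symmetric])
  finally show ?thesis unfolding VV by simp
qed

lemma fnn: "i < n \<Longrightarrow> 0 \<le> f i"
proof -
  assume i: "i < n"
  have "f i = (transpose_mat (X * V) * (X * V)) $$ (i,i)" using YY i by simp
  also have "\<dots> = col (X*V) i \<bullet> col (X*V) i" using Yc i V by simp
  also have "\<dots> \<ge> 0" by (auto simp: scalar_prod_def intro!: sum_nonneg)
  finally show ?thesis .
qed

lemma XY: "X = (X * V) * dg n (\<lambda>_. 1) * transpose_mat V"
proof -
  have "(X * V) * dg n (\<lambda>_. 1) * transpose_mat V = (X * V) * transpose_mat V"
    unfolding dg_one using right_mult_one_mat[OF Yc] by simp
  also have "\<dots> = X * (V * transpose_mat V)" using X V by (intro assoc_mult_mat[of _ m n _ n _ n]) auto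
  also have "\<dots> = X" unfolding VV' using X by simp
  finally show ?thesis by simp
qed

definition cc :: "real \<Rightarrow> nat \<Rightarrow> real" where "cc t i = (if i < K then 1 else 1 - t)"
definition dd :: "nat \<Rightarrow> real" where "dd i = (if i < K then 0 else -1)"
definition DD :: "real mat" where "DD = (X * V) * dg n dd * transpose_mat V"

lemma DDc: "DD \<in> carrier_mat m n" unfolding DD_def using X V by auto


lemma dir: "X + t \<cdot>\<^sub>m DD = (X * V) * dg n (cc t) * transpose_mat V"
proof (rule eq_matI)
  fix r c assume "r < dim_row ((X * V) * dg n (cc t) * transpose_mat V)"
    "c < dim_col ((X * V) * dg n (cc t) * transpose_mat V)"
  hence r: "r < m" and c: "c < n" using X V by auto
  have "(X + t \<cdot>\<^sub>m DD) $$ (r,c) = X $$ (r,c) + t * DD $$ (r,c)" using r c X DDc by simp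
  also have "X $$ (r,c) = (\<Sum>k<n. (X*V) $$ (r,k) * 1 * V $$ (c,k))"
    using ent[OF Yc V r c, of "\<lambda>_. 1"] XY by simp
  also have "DD $$ (r,c) = (\<Sum>k<n. (X*V) $$ (r,k) * dd k * V $$ (c,k))"
    unfolding DD_def by (rule ent[OF Yc V r c])
  also have "(\<Sum>k<n. (X*V) $$ (r,k) * 1 * V $$ (c,k)) + t * (\<Sum>k<n. (X*V) $$ (r,k) * dd k * V $$ (c,k))
      = (\<Sum>k<n. (X*V) $$ (r,k) * cc t k * V $$ (c,k))"
    unfolding sum_distrib_left sum.distrib[symmetric] by (rule sum.cong) (auto simp: cc_def dd_def algebra_simps)
  also have "\<dots> = ((X * V) * dg n (cc t) * transpose_mat V) $$ (r,c)" by (rule ent[OF Yc V r c, symmetric])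
  finally show "(X + t \<cdot>\<^sub>m DD) $$ (r,c) = ((X * V) * dg n (cc t) * transpose_mat V) $$ (r,c)" .
qed (use X V DDc in auto)



lemma gram_gen: "transpose_mat ((X * V) * dg n h * transpose_mat V) * ((X * V) * dg n h * transpose_mat V)
   = V * dg n (\<lambda>i. h i * (f i * h i)) * transpose_mat V"
proof -
  define Y where "Y = X * V"
  define H where "H = dg n h"
  have Y: "Y \<in> carrier_mat m n" unfolding Y_def by (rule Yc)
  have H: "H \<in> carrier_mat n n" unfolding H_def by simp
  have Yt: "transpose_mat Y \<in> carrier_mat n m" and Vt: "transpose_mat V \<in> carrier_mat n n" using Y V by auto
  have YH: "Y * H \<in> carrier_mat m n" using Y H by auto
  have HYt: "H * transpose_mat Y \<in> carrier_mat n m" using Yt H by auto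
  have "transpose_mat (Y * H * transpose_mat V) = transpose_mat (transpose_mat V) * transpose_mat (Y * H)"
    by (rule transpose_mult[OF YH Vt])
  also have "transpose_mat (Y * H) = transpose_mat H * transpose_mat Y" by (rule transpose_mult[OF Y H])
  finally have T: "transpose_mat (Y * H * transpose_mat V) = V * (H * transpose_mat Y)" unfolding H_def by simp
  have "transpose_mat (Y * H * transpose_mat V) * (Y * H * transpose_mat V)
     = V * ((H * transpose_mat Y) * ((Y * H) * transpose_mat V))"
    unfolding T by (rule assoc_mult_mat[OF V HYt, of _ n]) (use YH Vt in auto)
  also have "(H * transpose_mat Y) * ((Y * H) * transpose_mat V) = ((H * transpose_mat Y) * (Y * H)) * transpose_mat V"
    using HYt YH Vt by (rule assoc_mult_mat[symmetric])
  also have "(H * transpose_mat Y) * (Y * H) = H * (transpose_mat Y * (Y * H))"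
    using H Yt YH by (rule assoc_mult_mat)
  also have "transpose_mat Y * (Y * H) = (transpose_mat Y * Y) * H"
    using Yt Y H by (rule assoc_mult_mat[symmetric])
  also have "transpose_mat Y * Y = dg n f" unfolding Y_def by (rule YY)
  also have "H * (dg n f * H) = dg n (\<lambda>i. h i * (f i * h i))" unfolding H_def dg_mult ..
  also have "V * (dg n (\<lambda>i. h i * (f i * h i)) * transpose_mat V) = V * dg n (\<lambda>i. h i * (f i * h i)) * transpose_mat V"
    using V _ Vt by (rule assoc_mult_mat[symmetric]) simp
  finally show ?thesis unfolding Y_def H_def .
qed


lemma trunc_X: "trunc_nuc K X = (\<Sum>i = K+1..min m n. sqrt (f (i - 1)))"
proof -
  have sv: "singular_values X = map (\<lambda>i. sqrt (f i)) [0..<n]" by (rule singvals[OF V VV XX mono])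
  show ?thesis unfolding trunc_nuc_def sigma_def sv using X
    by (intro sum.cong) auto
qed

lemma trunc_t:
  assumes t0: "0 \<le> t" and t1: "t \<le> 1"
  shows "trunc_nuc K (X + t \<cdot>\<^sub>m DD) = (1 - t) * trunc_nuc K X"
proof -
  define h where "h = (\<lambda>i. cc t i * (f i * cc t i))"
  have G: "transpose_mat (X + t \<cdot>\<^sub>m DD) * (X + t \<cdot>\<^sub>m DD) = V * dg n h * transpose_mat V"
    unfolding dir h_def by (rule gram_gen)
  have hmono: "\<forall>i j. i \<le> j \<longrightarrow> j < n \<longrightarrow> h j \<le> h i"
  proof (intro allI impI)
    fix i j assume ij: "i \<le> j" "j < n"
    have fj: "0 \<le> f j" by (rule fnn[OF ij(2)])
    have fij: "f j \<le> f i" using mono ij by blast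
    have q: "(1 - t) * (1 - t) \<le> 1" using t0 t1 by (simp add: mult_le_one)
    have q2: "(1 - t) * (f j * (1 - t)) \<le> f j" using mult_right_mono[OF q fj] by (simp add: algebra_simps)
    show "h j \<le> h i"
    proof (cases "j < K")
      case True thus ?thesis using ij fij by (simp add: h_def cc_def)
    next
      case False
      show ?thesis
      proof (cases "i < K")
        case True thus ?thesis using False fij q2 by (simp add: h_def cc_def)
      next
        case F2: False
        have "(1 - t) * (f j * (1 - t)) \<le> (1 - t) * (f i * (1 - t))"
          using fij t1 by (intro mult_left_mono mult_right_mono) auto
        thus ?thesis using False F2 by (simp add: h_def cc_def)
      qed
    qed
  qed
  have sv: "singular_values (X + t \<cdot>\<^sub>m DD) = map (\<lambda>i. sqrt (h i)) [0..<n]"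
    by (rule singvals[OF V VV G hmono])
  have dims: "dim_row (X + t \<cdot>\<^sub>m DD) = m" "dim_col (X + t \<cdot>\<^sub>m DD) = n" using X DDc by auto
  have "trunc_nuc K (X + t \<cdot>\<^sub>m DD) = (\<Sum>i = K+1..min m n. (1 - t) * sqrt (f (i - 1)))"
    unfolding trunc_nuc_def sigma_def sv dims
  proof (intro sum.cong refl)
    fix i assume i: "i \<in> {K+1..min m n}"
    hence "i - 1 < n" "\<not> i - 1 < K" by auto
    hence "map (\<lambda>i. sqrt (h i)) [0..<n] ! (i - 1) = sqrt ((1 - t)^2 * f (i - 1))"
      by (simp add: h_def cc_def power2_eq_square mult_ac)
    also have "\<dots> = (1 - t) * sqrt (f (i - 1))" using t1 by (simp add: real_sqrt_mult)
    finally show "map (\<lambda>i. sqrt (h i)) [0..<n] ! (i - 1) = (1 - t) * sqrt (f (i - 1))" .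
  qed
  thus ?thesis unfolding trunc_X by (simp add: sum_distrib_left)
qed


lemma DDbound:
  assumes w: "w \<in> carrier_vec n"
  shows "(DD *\<^sub>v w) \<bullet> (DD *\<^sub>v w) \<le> f K * (w \<bullet> w)"
proof -
  define Y where "Y = X * V"
  have Y: "Y \<in> carrier_mat m n" unfolding Y_def by (rule Yc)
  have Vt: "transpose_mat V \<in> carrier_mat n n" using V by auto
  define u where "u = transpose_mat V *\<^sub>v w"
  have u: "u \<in> carrier_vec n" unfolding u_def using Vt w by auto
  define z where "z = dg n dd *\<^sub>v u"
  have z: "z \<in> carrier_vec n" unfolding z_def using mult_mat_vec_carrier[OF dg_carrier u] .
  have Dw: "DD *\<^sub>v w = Y *\<^sub>v z"
    unfolding DD_def Y_def z_def u_def using Yc Vt w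
    by (simp add: assoc_mult_mat_vec[of _ m n _ n])
  have "(Y *\<^sub>v z) \<bullet> (Y *\<^sub>v z) = (transpose_mat Y *\<^sub>v (Y *\<^sub>v z)) \<bullet> z"
    by (rule transpose_vec_mult_scalar[OF Y z, symmetric]) (use Y z in auto)
  also have "transpose_mat Y *\<^sub>v (Y *\<^sub>v z) = (transpose_mat Y * Y) *\<^sub>v z"
    using Y z by (simp add: assoc_mult_mat_vec[of _ n m _ n])
  also have "transpose_mat Y * Y = dg n f" unfolding Y_def by (rule YY)
  also have "(dg n f *\<^sub>v z) \<bullet> z = (\<Sum>i\<in>{0..<n}. f i * (dd i)^2 * (u $ i)^2)"
  proof -
    have ze: "z = vec n (\<lambda>i. dd i * u $ i)" unfolding z_def by (rule dg_mult_vec[OF u])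
    show ?thesis unfolding dg_mult_vec[OF z] using z u
      by (auto simp: scalar_prod_def power2_eq_square ze intro!: sum.cong)
  qed
  also have "\<dots> \<le> (\<Sum>i\<in>{0..<n}. f K * (u $ i)^2)"
  proof (rule sum_mono)
    fix i assume i: "i \<in> {0..<n}"
    have fK: "0 \<le> f K" using fnn Kmn by auto
    show "f i * (dd i)^2 * (u $ i)^2 \<le> f K * (u $ i)^2"
    proof (cases "i < K")
      case True thus ?thesis using fK by (simp add: dd_def)
    next
      case False
      hence "f i \<le> f K" using mono i by auto
      thus ?thesis using False by (simp add: dd_def mult_right_mono)
    qed
  qed
  also have "\<dots> = f K * (u \<bullet> u)" using u by (simp add: scalar_prod_def sum_distrib_left power2_eq_square)
  also have "u \<bullet> u = w \<bullet> w"
  proof -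
    have "u \<bullet> u = w \<bullet> (V *\<^sub>v u)" unfolding u_def
      by (rule transpose_vec_mult_scalar[OF V]) (use Vt w in auto)
    also have "V *\<^sub>v u = (V * transpose_mat V) *\<^sub>v w" unfolding u_def using V Vt w
      by (simp add: assoc_mult_mat_vec[of _ n n _ n])
    also have "\<dots> = w" unfolding VV' using w by simp
    finally show ?thesis .
  qed
  finally show ?thesis unfolding Dw .
qed


lemma rank_part:
  assumes fK: "f K = 0"
  shows "vec_space.rank m X \<le> K"
proof -
  define Y where "Y = X * V"
  have Y: "Y \<in> carrier_mat m n" unfolding Y_def by (rule Yc)
  have fz: "f i = 0" if "K \<le> i" "i < n" for i
    using fnn[OF that(2)] mono that fK by force
  have Yz: "Y $$ (r,i) = 0" if r: "r < m" and i: "K \<le> i" "i < n" for r i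
  proof -
    have "col Y i \<bullet> col Y i = (transpose_mat Y * Y) $$ (i,i)" using Y i by simp
    also have "\<dots> = 0" unfolding Y_def YY using fz[OF i] i by simp
    finally have "(\<Sum>k\<in>{0..<m}. Y $$ (k,i) * Y $$ (k,i)) = 0" using Y i by (simp add: scalar_prod_def)
    hence "\<forall>k\<in>{0..<m}. Y $$ (k,i) * Y $$ (k,i) = 0"
      by (subst sum_nonneg_eq_0_iff[symmetric]) auto
    thus ?thesis using r by auto
  qed
  have "X = mat m n (\<lambda>(r,c). \<Sum>k<K. Y $$ (r,k) * V $$ (c,k))"
  proof (rule eq_matI)
    fix r c assume "r < dim_row (mat m n (\<lambda>(r,c). \<Sum>k<K. Y $$ (r,k) * V $$ (c,k)))"
      "c < dim_col (mat m n (\<lambda>(r,c). \<Sum>k<K. Y $$ (r,k) * V $$ (c,k)))"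
    hence r: "r < m" and c: "c < n" by auto
    have "X $$ (r,c) = (\<Sum>k<n. Y $$ (r,k) * 1 * V $$ (c,k))"
      using ent[OF Yc V r c, of "\<lambda>_. 1"] XY unfolding Y_def by simp
    also have "\<dots> = (\<Sum>k<K. Y $$ (r,k) * V $$ (c,k))"
    proof -
      have "{..<n} = {..<K} \<union> {K..<n}" using Kmn by auto
      moreover have "(\<Sum>k\<in>{..<K} \<union> {K..<n}. Y $$ (r,k) * 1 * V $$ (c,k)) = (\<Sum>k<K. Y $$ (r,k) * 1 * V $$ (c,k)) + (\<Sum>k\<in>{K..<n}. Y $$ (r,k) * 1 * V $$ (c,k))"
        by (rule sum.union_disjoint) auto
      ultimately have "(\<Sum>k<n. Y $$ (r,k) * 1 * V $$ (c,k)) = (\<Sum>k<K. Y $$ (r,k) * 1 * V $$ (c,k)) + (\<Sum>k\<in>{K..<n}. Y $$ (r,k) * 1 * V $$ (c,k))"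
        by simp
      also have "(\<Sum>k\<in>{K..<n}. Y $$ (r,k) * 1 * V $$ (c,k)) = 0" using Yz r by auto
      finally show ?thesis by simp
    qed
    finally show "X $$ (r,c) = mat m n (\<lambda>(r,c). \<Sum>k<K. Y $$ (r,k) * V $$ (c,k)) $$ (r,c)" using r c by simp
  qed (use X in auto)
  hence "vec_space.rank m X = vec_space.rank m (mat m n (\<lambda>(r,c). \<Sum>k<K. (\<lambda>k r. Y $$ (r,k)) k r * (\<lambda>k c. V $$ (c,k)) k c) :: real mat)"
    by simp
  also have "\<dots> \<le> K" by (rule rank_sum_le)
  finally show ?thesis .
qed

end


lemma cs_sum:
  fixes a b :: "nat \<Rightarrow> real"
  shows "(\<Sum>i\<in>I. a i * b i)\<^sup>2 \<le> (\<Sum>i\<in>I. (a i)\<^sup>2) * (\<Sum>i\<in>I. (b i)\<^sup>2)"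
proof (cases "(\<Sum>i\<in>I. (b i)\<^sup>2) > 0")
  case False
  show ?thesis
  proof (cases "finite I")
    case fin: True
    have "(\<Sum>i\<in>I. (b i)\<^sup>2) = 0" using False by (meson linorder_neqE_linordered_idom not_less sum_nonneg zero_le_power2)
    hence "\<forall>i\<in>I. (b i)\<^sup>2 = 0" using sum_nonneg_eq_0_iff[OF fin, of "\<lambda>i. (b i)^2"] by simp
    hence "(\<Sum>i\<in>I. a i * b i) = 0" by simp
    moreover have "0 \<le> (\<Sum>i\<in>I. (a i)\<^sup>2) * (\<Sum>i\<in>I. (b i)\<^sup>2)" by (intro mult_nonneg_nonneg sum_nonneg) auto
    ultimately show ?thesis by simp
  qed simp
next
  case True
  define B where "B = (\<Sum>i\<in>I. (b i)\<^sup>2)"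
  define AB where "AB = (\<Sum>i\<in>I. a i * b i)"
  define A where "A = (\<Sum>i\<in>I. (a i)\<^sup>2)"
  define r where "r \<equiv> AB / B"
  have Bp: "B > 0" using True unfolding B_def .
  have "0 \<le> (\<Sum>i\<in>I. (a i - r * b i)\<^sup>2)"
    by (simp add: sum_nonneg)
  also have "(\<Sum>i\<in>I. (a i - r * b i)\<^sup>2) = (\<Sum>i\<in>I. (a i)\<^sup>2 - 2 * r * (a i * b i) + r\<^sup>2 * (b i)\<^sup>2)"
    by (rule sum.cong) (simp_all add: power2_eq_square algebra_simps)
  also have "\<dots> = A - 2 * r * AB + r\<^sup>2 * B"
    unfolding A_def AB_def B_def by (simp add: sum.distrib sum_subtractf sum_distrib_left)
  also have "\<dots> = A - AB\<^sup>2 / B"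
    using Bp by (simp add: r_def power2_eq_square field_simps)
  finally have "AB\<^sup>2 / B \<le> A" by simp
  thus ?thesis using Bp unfolding A_def AB_def B_def by (simp add: pos_divide_le_eq)
qed

lemma cs_vec:
  fixes a y :: "real vec"
  assumes a: "a \<in> carrier_vec m" and y: "y \<in> carrier_vec m"
  shows "\<bar>a \<bullet> y\<bar> \<le> sqrt (a \<bullet> a) * sqrt (y \<bullet> y)"
proof -
  have "(a \<bullet> y)^2 \<le> (a \<bullet> a) * (y \<bullet> y)"
    using cs_sum[of "\<lambda>i. a $ i" "\<lambda>i. y $ i" "{0..<m}"] a y by (simp add: scalar_prod_def power2_eq_square)
  hence "sqrt ((a \<bullet> y)^2) \<le> sqrt ((a \<bullet> a) * (y \<bullet> y))" by (rule real_sqrt_le_mono)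
  thus ?thesis by (simp add: real_sqrt_mult)
qed

lemma sprod_mat_vec:
  fixes a w :: "real vec" and D :: "real mat"
  assumes a: "a \<in> carrier_vec m" and D: "D \<in> carrier_mat m n" and w: "w \<in> carrier_vec n"
  shows "a \<bullet> (D *\<^sub>v w) = (\<Sum>c<n. w $ c * (a \<bullet> col D c))"
proof -
  have "a \<bullet> (D *\<^sub>v w) = (\<Sum>r<m. a $ r * (\<Sum>c<n. D $$ (r,c) * w $ c))"
    using a D w by (simp add: scalar_prod_def lessThan_atLeast0)
  also have "\<dots> = (\<Sum>r<m. \<Sum>c<n. w $ c * (a $ r * D $$ (r,c)))"
    by (simp add: sum_distrib_left mult_ac)
  also have "\<dots> = (\<Sum>c<n. \<Sum>r<m. w $ c * (a $ r * D $$ (r,c)))" by (rule sum.swap)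
  also have "\<dots> = (\<Sum>c<n. w $ c * (a \<bullet> col D c))"
    using a D by (auto simp: scalar_prod_def sum_distrib_left lessThan_atLeast0 intro!: sum.cong)
  finally show ?thesis .
qed

lemma term_bound:
  fixes a :: "real vec" and D :: "real mat" and C :: "nat \<Rightarrow> real"
  assumes a: "a \<in> carrier_vec m" and D: "D \<in> carrier_mat m n" and b: "b < n"
    and Db: "\<And>w. w \<in> carrier_vec n \<Longrightarrow> (D *\<^sub>v w) \<bullet> (D *\<^sub>v w) \<le> F * (w \<bullet> w)" and F: "0 \<le> F"
  shows "(\<Sum>l\<in>{0..<n}-{b}. (a \<bullet> col D l - a \<bullet> col D b) * exp (C l)) / (1 + (\<Sum>l\<in>{0..<n}-{b}. exp (C l)))
    \<le> sqrt (a \<bullet> a) * (sqrt 2 * sqrt F)"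
proof -
  define S where "S = {0..<n} - {b}"
  define E where "E = (\<Sum>l\<in>S. exp (C l))"
  have E0: "0 \<le> E" unfolding E_def by (auto intro: sum_nonneg)
  define p where "p = (\<lambda>l. exp (C l) / (1 + E))"
  define P where "P = (\<Sum>l\<in>S. p l)"
  have P: "P = E / (1 + E)" unfolding P_def p_def E_def by (simp add: sum_divide_distrib)
  have P0: "0 \<le> P" and P1: "P \<le> 1" unfolding P using E0 by auto
  have p0: "0 \<le> p l" for l unfolding p_def using E0 by auto
  have pP: "p l \<le> P" if "l \<in> S" for l unfolding P_def
    by (rule member_le_sum) (use that p0 in \<open>auto simp: S_def\<close>)
  define w where "w = vec n (\<lambda>c. (if c \<in> S then p c else 0) - (if c = b then P else 0))"
  have w: "w \<in> carrier_vec n" unfolding w_def by simp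
  define g where "g = (\<lambda>c. a \<bullet> col D c)"
  have finS: "finite S" unfolding S_def by simp
  have Sn: "S \<subseteq> {..<n}" unfolding S_def by auto
  have bS: "b \<notin> S" unfolding S_def by auto
  have lhs: "(\<Sum>l\<in>S. (g l - g b) * exp (C l)) / (1 + E) = a \<bullet> (D *\<^sub>v w)"
  proof -
    have "(\<Sum>l\<in>S. (g l - g b) * exp (C l)) / (1 + E) = (\<Sum>l\<in>S. p l * g l) - P * g b"
      unfolding P_def sum_distrib_right sum_subtractf[symmetric] p_def sum_divide_distrib
      by (rule sum.cong) (auto simp: algebra_simps diff_divide_distrib)
    also have "(\<Sum>l\<in>S. p l * g l) = (\<Sum>c<n. (if c \<in> S then p c else 0) * g c)"
    proof -
      have "(\<Sum>c<n. (if c \<in> S then p c else 0) * g c) = (\<Sum>c<n. if c \<in> S then p c * g c else 0)"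
        by (rule sum.cong) auto
      also have "\<dots> = (\<Sum>c\<in>{..<n} \<inter> S. p c * g c)" by (rule sum.inter_restrict[symmetric]) simp
      also have "{..<n} \<inter> S = S" using Sn by auto
      finally show ?thesis by simp
    qed
    also have "P * g b = (\<Sum>c<n. (if c = b then P else 0) * g c)"
    proof -
      have "(\<Sum>c<n. (if c = b then P else 0) * g c) = (\<Sum>c<n. if c = b then P * g b else 0)"
        by (rule sum.cong) auto
      thus ?thesis using b by simp
    qed
    also have "(\<Sum>c<n. (if c \<in> S then p c else 0) * g c) - (\<Sum>c<n. (if c = b then P else 0) * g c)
      = (\<Sum>c<n. w $ c * g c)" unfolding w_def sum_subtractf[symmetric] by (rule sum.cong) (auto simp: algebra_simps)
    also have "\<dots> = a \<bullet> (D *\<^sub>v w)" unfolding g_def by (rule sprod_mat_vec[OF a D w, symmetric])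
    finally show ?thesis .
  qed
  have ww: "w \<bullet> w \<le> 2"
  proof -
    have "w \<bullet> w = (\<Sum>c<n. (if c \<in> S then (p c)^2 else 0) + (if c = b then P^2 else 0))"
      unfolding w_def scalar_prod_def lessThan_atLeast0 using bS by (intro sum.cong) (auto simp: power2_eq_square)
    also have "\<dots> = (\<Sum>c\<in>S. (p c)^2) + P^2"
    proof -
      have "(\<Sum>c<n. (if c \<in> S then (p c)^2 else 0)) = (\<Sum>c\<in>{..<n} \<inter> S. (p c)^2)"
        by (rule sum.inter_restrict[symmetric]) simp
      also have "{..<n} \<inter> S = S" using Sn by auto
      finally have 1: "(\<Sum>c<n. (if c \<in> S then (p c)^2 else 0)) = (\<Sum>c\<in>S. (p c)^2)" .
      have 2: "(\<Sum>c<n. (if c = b then P^2 else 0)) = P^2" using b by simp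
      show ?thesis unfolding sum.distrib 1 2 ..
    qed
    also have "(\<Sum>c\<in>S. (p c)^2) \<le> (\<Sum>c\<in>S. p c)"
    proof (rule sum_mono)
      fix c assume "c \<in> S"
      hence "p c \<le> 1" using pP P1 by fastforce
      thus "(p c)^2 \<le> p c" using p0[of c] mult_left_mono[of "p c" 1 "p c"] by (simp add: power2_eq_square)
    qed
    also have "P^2 \<le> 1" using P0 P1 by (simp add: power_le_one)
    finally show ?thesis using P1 unfolding P_def by simp
  qed
  have Dw: "D *\<^sub>v w \<in> carrier_vec m" using D w by auto
  have "a \<bullet> (D *\<^sub>v w) \<le> \<bar>a \<bullet> (D *\<^sub>v w)\<bar>" by simp
  also have "\<dots> \<le> sqrt (a \<bullet> a) * sqrt ((D *\<^sub>v w) \<bullet> (D *\<^sub>v w))" by (rule cs_vec[OF a Dw])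
  also have "sqrt ((D *\<^sub>v w) \<bullet> (D *\<^sub>v w)) \<le> sqrt (F * 2)"
    using Db[OF w] ww F by (intro real_sqrt_le_mono) (meson mult_left_mono order_trans)
  hence "sqrt (a \<bullet> a) * sqrt ((D *\<^sub>v w) \<bullet> (D *\<^sub>v w)) \<le> sqrt (a \<bullet> a) * sqrt (F * 2)"
    by (intro mult_left_mono) (auto simp: scalar_prod_def intro!: sum_nonneg)
  finally have "a \<bullet> (D *\<^sub>v w) \<le> sqrt (a \<bullet> a) * (sqrt 2 * sqrt F)" by (simp add: real_sqrt_mult mult_ac)
  thus ?thesis using lhs unfolding S_def E_def g_def by simp
qed


lemma lse_deriv:
  fixes C Dd :: "nat \<Rightarrow> real" and S :: "nat set"
  shows "((\<lambda>t. ln (1 + (\<Sum>l\<in>S. exp (C l + t * Dd l)))) has_real_derivative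
    (\<Sum>l\<in>S. Dd l * exp (C l)) / (1 + (\<Sum>l\<in>S. exp (C l)))) (at 0)"
proof -
  have e: "((\<lambda>x. exp (C l + x * Dd l)) has_real_derivative Dd l * exp (C l)) (at 0)" for l
    by (rule derivative_eq_intros refl | simp)+
  have s: "((\<lambda>x. \<Sum>l\<in>S. exp (C l + x * Dd l)) has_real_derivative (\<Sum>l\<in>S. Dd l * exp (C l))) (at 0)"
    by (rule DERIV_sum[OF e])
  have i: "((\<lambda>x. 1 + (\<Sum>l\<in>S. exp (C l + x * Dd l))) has_real_derivative (\<Sum>l\<in>S. Dd l * exp (C l))) (at 0)"
    using DERIV_add[OF DERIV_const[of 1] s] by simp
  have pos: "0 < 1 + (\<Sum>l\<in>S. exp (C l + 0 * Dd l))"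
    by (simp add: add_pos_nonneg sum_nonneg)
  show ?thesis using DERIV_chain2[OF DERIV_ln_divide[OF pos] i] by simp
qed

theorem mainTheorem18:
  fixes m n q K :: nat and b :: "nat \<Rightarrow> nat" and a :: "nat \<Rightarrow> real vec"
    and \<gamma> :: real and Xs :: "real mat"
  assumes b: "\<forall>j<q. b j < n"
    and a: "\<forall>j<q. a j \<in> carrier_vec m"
    and K: "K < min m n"
    and gpos: "\<gamma> > 0"
    and stat: "d_stationary m n (objective n q b a K \<gamma>) Xs"
    and gbig: "\<gamma> > sqrt 2 * (\<Sum>j<q. sqrt (a j \<bullet> a j))"
  shows "trunc_nuc K Xs = 0 \<and> vec_space.rank m Xs \<le> K"
proof -
  from stat have Xs: "Xs \<in> carrier_mat m n"
    and st: "\<forall>D \<in> carrier_mat m n. \<exists>L. has_dir_deriv (objective n q b a K \<gamma>) Xs D L \<and> L \<ge> 0"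
    unfolding d_stationary_def by auto
  define M where "M = transpose_mat Xs * Xs"
  have Mc: "M \<in> carrier_mat n n" using Xs by (auto simp: M_def)
  have Xst: "transpose_mat Xs \<in> carrier_mat n m" using Xs by auto
  have Ms: "transpose_mat M = M" unfolding M_def using transpose_mult[OF Xst Xs] by simp
  obtain V f where V: "V \<in> carrier_mat n n" and VV: "transpose_mat V * V = 1\<^sub>m n"
    and mono: "\<forall>i j. i \<le> j \<longrightarrow> j < n \<longrightarrow> f j \<le> f i" and XX: "M = V * dg n f * transpose_mat V"
    using spectral[OF Mc Ms] by blast
  interpret S: spec_setup Xs V f m n K
    using Xs V VV XX mono K by unfold_locales (auto simp: M_def)
  define D where "D = S.DD"
  have Dc: "D \<in> carrier_mat m n" using S.DDc by (simp add: D_def)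
  define T where "T = trunc_nuc K Xs"
  define Sj where "Sj = (\<lambda>j. {0..<n} - {b j})"
  define Cf where "Cf = (\<lambda>j l. a j \<bullet> col Xs l - a j \<bullet> col Xs (b j))"
  define Df where "Df = (\<lambda>j l. a j \<bullet> col D l - a j \<bullet> col D (b j))"
  define \<phi> where "\<phi> = (\<lambda>t. \<Sum>j<q. ln (1 + (\<Sum>l\<in>Sj j. exp (Cf j l + t * Df j l))))"
  have colt: "a j \<bullet> col (Xs + t \<cdot>\<^sub>m D) l = a j \<bullet> col Xs l + t * (a j \<bullet> col D l)"
    if j: "j < q" and l: "l < n" for j l t
  proof -
    have tD: "t \<cdot>\<^sub>m D \<in> carrier_mat m n" using Dc by auto
    have "col (Xs + t \<cdot>\<^sub>m D) l = col Xs l + t \<cdot>\<^sub>v col D l"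
      using col_add[OF Xs tD l] col_smult[of l D t] Dc l by simp
    moreover have "col Xs l \<in> carrier_vec m" "col D l \<in> carrier_vec m" using Xs Dc l by auto
    moreover have "a j \<in> carrier_vec m" using a j by auto
    ultimately show ?thesis by (simp add: scalar_prod_add_distrib[of _ m])
  qed
  have obj_t: "objective n q b a K \<gamma> (Xs + t \<cdot>\<^sub>m D) = \<phi> t + \<gamma> * trunc_nuc K (Xs + t \<cdot>\<^sub>m D)" for t
  proof -
    have "(\<Sum>j<q. ln (1 + (\<Sum>l \<in> {0..<n} - {b j}. exp (a j \<bullet> col (Xs + t \<cdot>\<^sub>m D) l - a j \<bullet> col (Xs + t \<cdot>\<^sub>m D) (b j)))))
      = \<phi> t"
      unfolding \<phi>_def Sj_def Cf_def Df_def
    proof (intro sum.cong refl arg_cong[where f=ln] arg_cong[where f="\<lambda>x. 1 + x"])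
      fix j l assume j: "j \<in> {..<q}" and l: "l \<in> {0..<n} - {b j}"
      have bj: "b j < n" using b j by auto
      show "exp (a j \<bullet> col (Xs + t \<cdot>\<^sub>m D) l - a j \<bullet> col (Xs + t \<cdot>\<^sub>m D) (b j)) =
        exp (a j \<bullet> col Xs l - a j \<bullet> col Xs (b j) + t * (a j \<bullet> col D l - a j \<bullet> col D (b j)))"
        using colt[of j l t] colt[of j "b j" t] j l bj by (simp add: algebra_simps)
    qed
    thus ?thesis unfolding objective_def by simp
  qed
  have obj0: "objective n q b a K \<gamma> Xs = \<phi> 0 + \<gamma> * T"
    unfolding objective_def \<phi>_def Cf_def T_def Sj_def by simp
  have quot: "(objective n q b a K \<gamma> (Xs + t \<cdot>\<^sub>m D) - objective n q b a K \<gamma> Xs) / t = (\<phi> t - \<phi> 0) / t + (- \<gamma> * T)"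
    if t: "0 < t" "t < 1" for t
  proof -
    have tr: "trunc_nuc K (Xs + t \<cdot>\<^sub>m D) = (1 - t) * T" unfolding D_def T_def
      by (rule S.trunc_t) (use t in auto)
    show ?thesis unfolding obj_t obj0 tr using t by (simp add: field_simps)
  qed
  define \<phi>' where "\<phi>' = (\<Sum>j<q. (\<Sum>l\<in>Sj j. Df j l * exp (Cf j l)) / (1 + (\<Sum>l\<in>Sj j. exp (Cf j l))))"
  have der: "(\<phi> has_real_derivative \<phi>') (at 0)"
    unfolding \<phi>_def \<phi>'_def by (rule DERIV_sum) (rule lse_deriv)
  have lim: "((\<lambda>t. (\<phi> t - \<phi> 0) / t) \<longlongrightarrow> \<phi>') (at_right 0)"
  proof -
    have "((\<lambda>t. (\<phi> t - \<phi> 0) / (t - 0)) \<longlongrightarrow> \<phi>') (at 0)"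
      using der unfolding has_field_derivative_iff by simp
    hence "((\<lambda>t. (\<phi> t - \<phi> 0) / t) \<longlongrightarrow> \<phi>') (at 0)" by simp
    thus ?thesis by (rule tendsto_mono[OF at_le, rotated]) simp
  qed
  have hd: "has_dir_deriv (objective n q b a K \<gamma>) Xs D (\<phi>' + (- \<gamma> * T))"
    unfolding has_dir_deriv_def
  proof (rule tendsto_cong[THEN iffD1, OF _ tendsto_add[OF lim tendsto_const]])
    have "\<forall>\<^sub>F t in at_right 0. t \<in> {0<..<(1::real)}" using eventually_at_right_real[of "0::real" 1] by simp
    thus "\<forall>\<^sub>F t in at_right 0. (\<phi> t - \<phi> 0) / t + (- \<gamma> * T) =
      (objective n q b a K \<gamma> (Xs + t \<cdot>\<^sub>m D) - objective n q b a K \<gamma> Xs) / t"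
      by eventually_elim (use quot in auto)
  qed
  obtain L where hL: "has_dir_deriv (objective n q b a K \<gamma>) Xs D L" and L0: "L \<ge> 0"
    using st Dc by blast
  have "L = \<phi>' + (- \<gamma> * T)"
    using tendsto_unique[OF trivial_limit_at_right_real hL[unfolded has_dir_deriv_def]
        hd[unfolded has_dir_deriv_def]] .
  hence main: "0 \<le> \<phi>' - \<gamma> * T" using L0 by simp
  have fKn: "0 \<le> f K" using S.fnn K by auto
  have bound: "\<phi>' \<le> sqrt 2 * (\<Sum>j<q. sqrt (a j \<bullet> a j)) * sqrt (f K)"
  proof -
    have "\<phi>' \<le> (\<Sum>j<q. sqrt (a j \<bullet> a j) * (sqrt 2 * sqrt (f K)))"
      unfolding \<phi>'_def
    proof (rule sum_mono)
      fix j assume j: "j \<in> {..<q}"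
      have aj: "a j \<in> carrier_vec m" using a j by auto
      have bj: "b j < n" using b j by auto
      show "(\<Sum>l\<in>Sj j. Df j l * exp (Cf j l)) / (1 + (\<Sum>l\<in>Sj j. exp (Cf j l)))
         \<le> sqrt (a j \<bullet> a j) * (sqrt 2 * sqrt (f K))"
        unfolding Sj_def Df_def
        by (rule term_bound[OF aj Dc bj _ fKn]) (use S.DDbound in \<open>simp add: D_def\<close>)
    qed
    also have "\<dots> = sqrt 2 * (\<Sum>j<q. sqrt (a j \<bullet> a j)) * sqrt (f K)"
      by (simp add: sum_distrib_left sum_distrib_right mult_ac)
    finally show ?thesis .
  qed
  have Tsum: "T = (\<Sum>i = K+1..min m n. sqrt (f (i - 1)))" unfolding T_def by (rule S.trunc_X)

  have nn: "0 \<le> sqrt (f (i - 1))" if "i \<in> {K+1..min m n}" for i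
  proof -
    have "i - 1 < n" using that by auto
    thus ?thesis using S.fnn by auto
  qed
  have "sqrt (f ((K+1) - 1)) \<le> (\<Sum>i = K+1..min m n. sqrt (f (i - 1)))"
    by (rule member_le_sum) (use nn K in auto)
  hence fKT: "sqrt (f K) \<le> T" unfolding Tsum by simp
  have T0: "0 \<le> T" unfolding Tsum using nn by (auto intro!: sum_nonneg)
  define c0 where "c0 = sqrt 2 * (\<Sum>j<q. sqrt (a j \<bullet> a j))"
  have vv: "0 \<le> v \<bullet> v" for v :: "real vec" by (auto simp: scalar_prod_def intro!: sum_nonneg)
  have c0: "0 \<le> c0" unfolding c0_def using vv by (auto intro!: sum_nonneg mult_nonneg_nonneg)
  have "0 \<le> c0 * sqrt (f K) - \<gamma> * T" using main bound unfolding c0_def by linarith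
  also have "c0 * sqrt (f K) \<le> c0 * T" using fKT c0 by (rule mult_left_mono)
  finally have "0 \<le> (c0 - \<gamma>) * T" by (simp add: algebra_simps)
  moreover have "c0 - \<gamma> < 0" using gbig unfolding c0_def by simp
  ultimately have "T \<le> 0" by (simp add: zero_le_mult_iff)
  hence TT: "T = 0" using T0 by simp
  hence "sqrt (f K) = 0" using fKT fKn by (metis antisym real_sqrt_ge_zero)
  hence "f K = 0" by simp
  hence "vec_space.rank m Xs \<le> K" by (rule S.rank_part)
  thus ?thesis using TT unfolding T_def by simp
qed

end
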